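(* Let $\mathcal{X}=\{A\in\mathcal{M}_d: A=A^\dagger,\ \operatorname{tr}A=0\}$, viewed as a real vector space, with basis consisting of $\sigma_x^{jk}=|j\rangle\langle k|+|k\rangle\langle j|$ and $\sigma_y^{jk}=-i(|j\rangle\langle k|-|k\rangle\langle j|)$ for $1\le j<k\le d$, and $\sigma_z^j=|j\rangle\langle j|-|j+1\rangle\langle j+1|$ for $j=1,\dots,d-1$. Let $\mathcal{V}=\{A\mapsto UAU^\dagger: U\in\mathcal{M}_d\text{ unitary}\}$, regarded as a set of real-linear maps on $\mathcal{X}$, and let $\mathrm{zerospan}_{\mathbb{R}}\mathcal{V}$ denote the set of all finite real linear combinations $\sum_i\lambda_i V_i$ with $V_i\in\mathcal{V}$, $\lambda_i\in\mathbb{R}$ and $\sum_i\lambda_i=0$. Then for each basis vector $B$ of $\mathcal{X}$ listed above there exists $T\in\mathrm{zerospan}_{\mathbb{R}}\mathcal{V}$ with $T(B)=B$ and $T(B')=0$ for every other basis vector $B'$ in the list.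
   Context: $\{|1\rangle,\dots,|d\rangle\}$ is the standard basis of $\mathbb{C}^d$. *)

theory Defs
  imports "Jordan_Normal_Form.Schur_Decomposition"
begin

(* Matrices are d x d complex JNF matrices; the standard basis |1>,...,|d>
   is indexed 0,...,d-1. *)

definition ketbra :: "nat \<Rightarrow> nat \<Rightarrow> nat \<Rightarrow> complex mat" where
  "ketbra d j k = mat d d (\<lambda>(a, b). if a = j \<and> b = k then 1 else 0)"

definition unitary_mat :: "nat \<Rightarrow> complex mat \<Rightarrow> bool" where
  "unitary_mat d U \<longleftrightarrow> U \<in> carrier_mat d d \<and>
     U * mat_adjoint U = 1\<^sub>m d \<and> mat_adjoint U * U = 1\<^sub>m d"

definition sigma_x :: "nat \<Rightarrow> nat \<Rightarrow> nat \<Rightarrow> complex mat" where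
  "sigma_x d j k = ketbra d j k + ketbra d k j"

definition sigma_y :: "nat \<Rightarrow> nat \<Rightarrow> nat \<Rightarrow> complex mat" where
  "sigma_y d j k = (- \<i>) \<cdot>\<^sub>m (ketbra d j k - ketbra d k j)"

definition sigma_z :: "nat \<Rightarrow> nat \<Rightarrow> complex mat" where
  "sigma_z d j = ketbra d j j - ketbra d (j + 1) (j + 1)"

definition herm_basis :: "nat \<Rightarrow> complex mat set" where
  "herm_basis d =
     {sigma_x d j k | j k. j < k \<and> k < d} \<union>
     {sigma_y d j k | j k. j < k \<and> k < d} \<union>
     {sigma_z d j | j. j + 1 < d}"

definition conj_comb :: "nat \<Rightarrow> (nat \<Rightarrow> real) \<Rightarrow> (nat \<Rightarrow> complex mat) \<Rightarrow> complex mat \<Rightarrow> complex mat" where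
  "conj_comb n lam U A =
     foldr (+) (map (\<lambda>i. complex_of_real (lam i) \<cdot>\<^sub>m (U i * A * mat_adjoint (U i))) [0..<n])
       (0\<^sub>m (dim_row A) (dim_col A))"

definition zerospan_conj :: "nat \<Rightarrow> (complex mat \<Rightarrow> complex mat) set" where
  "zerospan_conj d = {conj_comb n lam U | n lam U.
      (\<forall>i<n. unitary_mat d (U i)) \<and> (\<Sum>i<n. lam i) = 0}"

end

theory Submission
  imports Defs
begin


lemma adj_index: assumes "U \<in> carrier_mat d d" "i < d" "j < d"
  shows "mat_adjoint U $$ (i,j) = cnj (U $$ (j,i))"
  using assms unfolding mat_adjoint_def by (simp add: mat_of_rows_index)

lemma adj_carrier: assumes "U \<in> carrier_mat d d" shows "mat_adjoint U \<in> carrier_mat d d"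
  using assms unfolding mat_adjoint_def by auto

definition monoM :: "nat \<Rightarrow> (nat \<Rightarrow> nat) \<Rightarrow> (nat \<Rightarrow> complex) \<Rightarrow> complex mat" where
  "monoM d \<sigma> \<phi> = mat d d (\<lambda>(p,a). if a = \<sigma> p then \<phi> p else 0)"

lemma monoM_mult: assumes "A \<in> carrier_mat d d" "p < d" "b < d" "\<sigma> p < d"
  shows "(monoM d \<sigma> \<phi> * A) $$ (p,b) = \<phi> p * A $$ (\<sigma> p, b)"
proof -
  have "(monoM d \<sigma> \<phi> * A) $$ (p,b) = (\<Sum>a\<in>{0..<d}. (if a = \<sigma> p then \<phi> p else 0) * A $$ (a,b))"
    using assms by (simp add: monoM_def scalar_prod_def)
  also have "\<dots> = (\<Sum>a\<in>{0..<d}. if a = \<sigma> p then \<phi> p * A $$ (a,b) else 0)"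
    by (rule sum.cong) auto
  also have "\<dots> = \<phi> p * A $$ (\<sigma> p, b)" using assms by (simp add: sum.delta)
  finally show ?thesis .
qed

lemma monoM_conj: assumes "A \<in> carrier_mat d d" "p < d" "q < d" "\<forall>x<d. \<sigma> x < d"
  shows "(monoM d \<sigma> \<phi> * A * mat_adjoint (monoM d \<sigma> \<phi>)) $$ (p,q) = \<phi> p * A $$ (\<sigma> p, \<sigma> q) * cnj (\<phi> q)"
proof -
  have c: "monoM d \<sigma> \<phi> \<in> carrier_mat d d" by (simp add: monoM_def)
  let ?M = "monoM d \<sigma> \<phi>"
  have ma: "?M * A \<in> carrier_mat d d" using c assms by auto
  have "(?M * A * mat_adjoint ?M) $$ (p,q) = row (?M * A) p \<bullet> col (mat_adjoint ?M) q"
    using ma adj_carrier[OF c] assms by (intro index_mult_mat(1)) auto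
  also have "\<dots> = (\<Sum>b\<in>{0..<d}. (?M * A) $$ (p,b) * mat_adjoint ?M $$ (b,q))"
    unfolding scalar_prod_def using ma adj_carrier[OF c] assms
    by (intro sum.cong) (auto simp del: index_mult_mat)
  also have "\<dots> = (\<Sum>b\<in>{0..<d}. if b = \<sigma> q then \<phi> p * A $$ (\<sigma> p, b) * cnj (\<phi> q) else 0)"
    apply (rule sum.cong, simp)
    subgoal for b using assms by (simp add: monoM_mult adj_index[OF c] del: index_mult_mat) (simp add: monoM_def)
    done
  also have "\<dots> = \<phi> p * A $$ (\<sigma> p, \<sigma> q) * cnj (\<phi> q)" using assms by (simp add: sum.delta)
  finally show ?thesis .
qed

lemma monoM_unitary: assumes "\<forall>x<d. \<sigma> x < d" "inj_on \<sigma> {..<d}" "\<forall>x. \<phi> x * cnj (\<phi> x) = 1"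
  shows "unitary_mat d (monoM d \<sigma> \<phi>)"
proof -
  let ?M = "monoM d \<sigma> \<phi>"
  have c: "?M \<in> carrier_mat d d" by (simp add: monoM_def)
  have ac: "mat_adjoint ?M \<in> carrier_mat d d" by (rule adj_carrier[OF c])
  have surj: "\<sigma> ` {..<d} = {..<d}"
    using assms by (intro endo_inj_surj) auto
  have 1: "?M * mat_adjoint ?M = 1\<^sub>m d"
  proof (rule eq_matI)
    fix p q assume pq: "p < dim_row (1\<^sub>m d)" "q < dim_col (1\<^sub>m d)"
    hence pq': "p < d" "q < d" by auto
    have "(?M * mat_adjoint ?M) $$ (p,q) = (\<Sum>b\<in>{0..<d}. ?M $$ (p,b) * mat_adjoint ?M $$ (b,q))"
      using c ac pq' by (simp add: scalar_prod_def)
    also have "\<dots> = (\<Sum>b\<in>{0..<d}. if b = \<sigma> p then \<phi> p * cnj (if \<sigma> p = \<sigma> q then \<phi> q else 0) else 0)"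
      apply (rule sum.cong, simp)
      subgoal for b using pq' assms(1) by (simp add: adj_index[OF c]) (auto simp: monoM_def)
      done
    also have "\<dots> = (if p = q then 1 else 0)"
      using pq' assms by (auto simp: inj_on_def)
    finally show "(?M * mat_adjoint ?M) $$ (p,q) = 1\<^sub>m d $$ (p,q)" using pq' by simp
  qed (use c ac in auto)
  have 2: "mat_adjoint ?M * ?M = 1\<^sub>m d"
  proof (rule eq_matI)
    fix a b assume ab: "a < dim_row (1\<^sub>m d)" "b < dim_col (1\<^sub>m d)"
    hence ab': "a < d" "b < d" by auto
    have "a \<in> \<sigma> ` {..<d}" using surj ab' by simp
    then obtain p0 where p0: "p0 < d" "\<sigma> p0 = a" by auto
    have "(mat_adjoint ?M * ?M) $$ (a,b) = (\<Sum>p\<in>{0..<d}. mat_adjoint ?M $$ (a,p) * ?M $$ (p,b))"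
      using c ac ab' by (simp add: scalar_prod_def)
    also have "\<dots> = (\<Sum>p\<in>{0..<d}. if p = p0 then (if b = a then cnj (\<phi> p) * \<phi> p else 0) else 0)"
    proof (rule sum.cong)
      fix p assume "p \<in> {0..<d}"
      hence p: "p < d" by auto
      have "\<sigma> p = a \<longleftrightarrow> p = p0" using p p0 assms(2) by (auto simp: inj_on_def)
      moreover have "mat_adjoint ?M $$ (a,p) = cnj (?M $$ (p,a))" using p ab' by (simp add: adj_index[OF c])
      moreover have "?M $$ (p,a) = (if a = \<sigma> p then \<phi> p else 0)" "?M $$ (p,b) = (if b = \<sigma> p then \<phi> p else 0)"
        using p ab' by (simp_all add: monoM_def)
      ultimately show "mat_adjoint ?M $$ (a,p) * ?M $$ (p,b) = (if p = p0 then (if b = a then cnj (\<phi> p) * \<phi> p else 0) else 0)"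
        by auto
    qed simp
    also have "\<dots> = (if a = b then 1 else 0)"
    proof -
      have "cnj (\<phi> p0) * \<phi> p0 = 1" using assms(3) by (simp add: mult.commute)
      thus ?thesis using p0 by (simp add: sum.delta)
    qed
    finally show "(mat_adjoint ?M * ?M) $$ (a,b) = 1\<^sub>m d $$ (a,b)" using ab' by simp
  qed (use c ac in auto)
  show ?thesis unfolding unitary_mat_def using c 1 2 by auto
qed

type_synonym trm = "real \<times> (nat \<Rightarrow> nat) \<times> (nat \<Rightarrow> complex)"

definition ev :: "trm list \<Rightarrow> complex mat \<Rightarrow> nat \<Rightarrow> nat \<Rightarrow> complex" where
  "ev xs A p q = (\<Sum>(l,\<sigma>,\<phi>)\<leftarrow>xs. complex_of_real l * (\<phi> p * A $$ (\<sigma> p, \<sigma> q) * cnj (\<phi> q)))"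

definition okt :: "nat \<Rightarrow> trm \<Rightarrow> bool" where
  "okt d t = (case t of (l,\<sigma>,\<phi>) \<Rightarrow> (\<forall>x<d. \<sigma> x < d) \<and> inj_on \<sigma> {..<d} \<and> (\<forall>x. \<phi> x * cnj (\<phi> x) = 1))"

lemma foldr_mat: "\<forall>x\<in>set ys. g x \<in> carrier_mat d d \<Longrightarrow>
   foldr (+) (map g ys) (0\<^sub>m d d) = mat d d (\<lambda>(p,q). \<Sum>x\<leftarrow>ys. g x $$ (p,q))"
proof (induction ys)
  case Nil
  show ?case by (rule eq_matI) auto
next
  case (Cons y ys)
  hence IH: "foldr (+) (map g ys) (0\<^sub>m d d) = mat d d (\<lambda>(p,q). \<Sum>x\<leftarrow>ys. g x $$ (p,q))" by auto
  have gy: "g y \<in> carrier_mat d d" using Cons by auto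
  show ?case unfolding list.map foldr_Cons o_def IH
    by (rule eq_matI) (use gy in auto)
qed

lemma realize:
  assumes ok: "\<forall>t\<in>set xs. okt d t" and s: "sum_list (map fst xs) = 0"
  shows "\<exists>T\<in>zerospan_conj d. \<forall>A\<in>carrier_mat d d. T A = mat d d (\<lambda>(p,q). ev xs A p q)"
proof -
  define n where "n = length xs"
  define lam where "lam = (\<lambda>i. fst (xs!i))"
  define U where "U = (\<lambda>i. monoM d (fst (snd (xs!i))) (snd (snd (xs!i))))"
  have okn: "\<And>i. i < n \<Longrightarrow> okt d (xs!i)" using ok n_def by auto
  have un: "\<forall>i<n. unitary_mat d (U i)"
  proof (intro allI impI)
    fix i assume "i < n"
    from okn[OF this] show "unitary_mat d (U i)" unfolding U_def okt_def
      by (cases "xs!i") (auto intro: monoM_unitary)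
  qed
  have sm: "(\<Sum>i<n. lam i) = 0"
    using s unfolding sum_list_sum_nth lam_def n_def by (simp add: atLeast0LessThan)
  have val: "conj_comb n lam U A = mat d d (\<lambda>(p,q). ev xs A p q)" if A: "A \<in> carrier_mat d d" for A
  proof -
    have Uc: "U i \<in> carrier_mat d d" for i by (simp add: U_def monoM_def)
    have "conj_comb n lam U A = foldr (+) (map (\<lambda>i. complex_of_real (lam i) \<cdot>\<^sub>m (U i * A * mat_adjoint (U i))) [0..<n]) (0\<^sub>m d d)"
      using A unfolding conj_comb_def by simp
    also have "\<dots> = mat d d (\<lambda>(p,q). \<Sum>i\<leftarrow>[0..<n]. (complex_of_real (lam i) \<cdot>\<^sub>m (U i * A * mat_adjoint (U i))) $$ (p,q))"
    proof (rule foldr_mat, intro ballI)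
      fix i show "complex_of_real (lam i) \<cdot>\<^sub>m (U i * A * mat_adjoint (U i)) \<in> carrier_mat d d"
        using A Uc[of i] adj_carrier[OF Uc[of i]] by (meson mult_carrier_mat smult_carrier_mat)
    qed
    also have "\<dots> = mat d d (\<lambda>(p,q). ev xs A p q)"
    proof (rule eq_matI)
      fix p q assume "p < dim_row (mat d d (\<lambda>(p,q). ev xs A p q))" "q < dim_col (mat d d (\<lambda>(p,q). ev xs A p q))"
      hence pq: "p < d" "q < d" by auto
      have "(\<Sum>i\<leftarrow>[0..<n]. (complex_of_real (lam i) \<cdot>\<^sub>m (U i * A * mat_adjoint (U i))) $$ (p,q))
          = (\<Sum>i\<leftarrow>[0..<n]. (\<lambda>(l,\<sigma>,\<phi>). complex_of_real l * (\<phi> p * A $$ (\<sigma> p, \<sigma> q) * cnj (\<phi> q))) (xs!i))"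
      proof (rule arg_cong[where f=sum_list], rule map_cong, simp)
        fix i assume "i \<in> set [0..<n]"
        hence i: "i < n" by auto
        obtain l \<sigma> \<phi> where xi: "xs!i = (l,\<sigma>,\<phi>)" by (cases "xs!i") auto
        have sd: "\<forall>x<d. \<sigma> x < d" using okn[OF i] xi unfolding okt_def by auto
        have "(U i * A * mat_adjoint (U i)) $$ (p,q) = \<phi> p * A $$ (\<sigma> p, \<sigma> q) * cnj (\<phi> q)"
          unfolding U_def xi using monoM_conj[OF A pq sd] by simp
        moreover have "U i * A * mat_adjoint (U i) \<in> carrier_mat d d"
          using A Uc[of i] adj_carrier[OF Uc[of i]] by (meson mult_carrier_mat)
        note cd = carrier_matD[OF this]
        ultimately show "(complex_of_real (lam i) \<cdot>\<^sub>m (U i * A * mat_adjoint (U i))) $$ (p,q)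
          = (\<lambda>(l,\<sigma>,\<phi>). complex_of_real l * (\<phi> p * A $$ (\<sigma> p, \<sigma> q) * cnj (\<phi> q))) (xs!i)"
          using pq xi cd unfolding lam_def by (simp del: index_mult_mat)
      qed
      also have "\<dots> = ev xs A p q"
        unfolding ev_def n_def by (rule arg_cong[where f=sum_list], rule nth_equalityI) auto
      finally show "mat d d (\<lambda>(p,q). \<Sum>i\<leftarrow>[0..<n]. (complex_of_real (lam i) \<cdot>\<^sub>m (U i * A * mat_adjoint (U i))) $$ (p,q)) $$ (p,q)
         = mat d d (\<lambda>(p,q). ev xs A p q) $$ (p,q)" using pq by simp
    qed auto
    finally show ?thesis .
  qed
  have "conj_comb n lam U \<in> zerospan_conj d"
    unfolding zerospan_conj_def using un sm by blast
  thus ?thesis using val by blast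
qed



definition cmp :: "trm list \<Rightarrow> trm list \<Rightarrow> trm list" where
  "cmp xs ys = concat (map (\<lambda>(l,\<sigma>,\<phi>). map (\<lambda>(m,\<tau>,\<psi>). (l*m, \<tau> \<circ> \<sigma>, \<lambda>p. \<phi> p * \<psi> (\<sigma> p))) ys) xs)"

definition scl :: "real \<Rightarrow> trm list \<Rightarrow> trm list" where
  "scl c xs = map (\<lambda>(l,\<sigma>,\<phi>). (c*l,\<sigma>,\<phi>)) xs"

lemma ev_Nil[simp]: "ev [] A p q = 0" by (simp add: ev_def)
lemma ev_Cons: "ev ((l,\<sigma>,\<phi>)#xs) A p q = complex_of_real l * (\<phi> p * A $$ (\<sigma> p, \<sigma> q) * cnj (\<phi> q)) + ev xs A p q"
  by (simp add: ev_def)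
lemma ev_append[simp]: "ev (xs@ys) A p q = ev xs A p q + ev ys A p q" by (simp add: ev_def)
lemma ev_scl[simp]: "ev (scl c xs) A p q = complex_of_real c * ev xs A p q"
  by (induction xs) (auto simp: ev_def scl_def algebra_simps)
lemma ev_concat: "ev (concat (map f L)) A p q = (\<Sum>x\<leftarrow>L. ev (f x) A p q)"
  by (induction L) auto

lemma ev_cmp_aux: "ev (map (\<lambda>(m,\<tau>,\<psi>). (l*m, \<tau> \<circ> \<sigma>, \<lambda>p. \<phi> p * \<psi> (\<sigma> p))) ys) A p q
   = complex_of_real l * (\<phi> p * ev ys A (\<sigma> p) (\<sigma> q) * cnj (\<phi> q))"
  by (induction ys) (auto simp: ev_def algebra_simps)

lemma ev_cmp:
  assumes "\<forall>t\<in>set xs. okt d t" "p < d" "q < d"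
  shows "ev (cmp xs ys) A p q = ev xs (mat d d (\<lambda>(p,q). ev ys A p q)) p q"
  using assms(1)
proof (induction xs)
  case Nil thus ?case by (simp add: cmp_def)
next
  case (Cons t xs)
  obtain l \<sigma> \<phi> where t: "t = (l,\<sigma>,\<phi>)" by (cases t) auto
  have s: "\<sigma> p < d" "\<sigma> q < d" using Cons.prems assms t unfolding okt_def by auto
  have "ev (cmp (t#xs) ys) A p q = ev (map (\<lambda>(m,\<tau>,\<psi>). (l*m, \<tau> \<circ> \<sigma>, \<lambda>p. \<phi> p * \<psi> (\<sigma> p))) ys) A p q + ev (cmp xs ys) A p q"
    by (simp add: cmp_def t)
  also have "\<dots> = ev (t#xs) (mat d d (\<lambda>(p,q). ev ys A p q)) p q"
    using Cons s by (simp add: ev_cmp_aux t ev_Cons)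
  finally show ?case .
qed

lemma fst_append: "sum_list (map fst (xs@ys)) = sum_list (map fst xs) + sum_list (map fst ys)" by simp
lemma fst_scl: "sum_list (map fst (scl c xs)) = c * sum_list (map fst xs)"
  by (induction xs) (auto simp: scl_def algebra_simps)
lemma fst_cmp: "sum_list (map fst (cmp xs ys)) = sum_list (map fst xs) * sum_list (map fst ys)"
proof (induction xs)
  case Nil thus ?case by (simp add: cmp_def)
next
  case (Cons t xs)
  obtain l \<sigma> \<phi> where t: "t = (l,\<sigma>,\<phi>)" by (cases t) auto
  have "sum_list (map fst (map (\<lambda>(m,\<tau>,\<psi>). (l*m, \<tau> \<circ> \<sigma>, \<lambda>p. \<phi> p * \<psi> (\<sigma> p))) ys)) = l * sum_list (map fst ys)"
    by (induction ys) (auto simp: algebra_simps)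
  thus ?case using Cons by (simp add: cmp_def t algebra_simps)
qed

lemma ok_scl: "\<forall>t\<in>set xs. okt d t \<Longrightarrow> \<forall>t\<in>set (scl c xs). okt d t"
  by (auto simp: scl_def okt_def)
lemma ok_cmp: assumes "\<forall>t\<in>set xs. okt d t" "\<forall>t\<in>set ys. okt d t"
  shows "\<forall>t\<in>set (cmp xs ys). okt d t"
proof
  fix t assume "t \<in> set (cmp xs ys)"
  then obtain l \<sigma> \<phi> m \<tau> \<psi> where a: "(l,\<sigma>,\<phi>) \<in> set xs" "(m,\<tau>,\<psi>) \<in> set ys"
     and t: "t = (l*m, \<tau> \<circ> \<sigma>, \<lambda>p. \<phi> p * \<psi> (\<sigma> p))"
    unfolding cmp_def by (auto simp: o_def)
  have o1: "okt d (l,\<sigma>,\<phi>)" "okt d (m,\<tau>,\<psi>)" using a assms by auto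
  have "inj_on (\<tau> \<circ> \<sigma>) {..<d}"
  proof (rule comp_inj_on)
    show "inj_on \<sigma> {..<d}" using o1 unfolding okt_def by simp
    have "\<sigma> ` {..<d} \<subseteq> {..<d}" using o1 unfolding okt_def by auto
    moreover have "inj_on \<tau> {..<d}" using o1 unfolding okt_def by simp
    ultimately show "inj_on \<tau> (\<sigma> ` {..<d})" by (rule inj_on_subset[rotated])
  qed
  moreover have "(\<phi> x * \<psi> (\<sigma> x)) * cnj (\<phi> x * \<psi> (\<sigma> x)) = 1" for x
  proof -
    have "(\<phi> x * \<psi> (\<sigma> x)) * cnj (\<phi> x * \<psi> (\<sigma> x)) = (\<phi> x * cnj (\<phi> x)) * (\<psi> (\<sigma> x) * cnj (\<psi> (\<sigma> x)))"
      by (simp add: algebra_simps)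
    also have "\<dots> = 1" using o1 unfolding okt_def by (simp only: mult_1 split: prod.splits) simp
    finally show ?thesis .
  qed
  moreover have "\<forall>x<d. (\<tau> \<circ> \<sigma>) x < d" using o1 unfolding okt_def by auto
  ultimately show "okt d t" unfolding okt_def t by simp
qed



definition sw :: "nat \<Rightarrow> nat \<Rightarrow> nat \<Rightarrow> nat" where
  "sw a b x = (if x = a then b else if x = b then a else x)"

definition idt :: "trm list" where "idt = [(1, id, \<lambda>_. 1)]"
definition sgnt :: "nat \<Rightarrow> trm list" where "sgnt a = [(1, id, \<lambda>p. if p = a then -1 else 1)]"
definition swp :: "nat \<Rightarrow> nat \<Rightarrow> trm list" where "swp a b = [(1, sw a b, \<lambda>_. 1)]"
definition KK :: "nat \<Rightarrow> trm list" where "KK a = scl (1/2) (idt @ sgnt a)"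
fun Kl :: "nat list \<Rightarrow> trm list" where
  "Kl [] = idt"
| "Kl (a#as) = cmp (KK a) (Kl as)"

lemma sw_lt: "a < d \<Longrightarrow> b < d \<Longrightarrow> x < d \<Longrightarrow> sw a b x < d" by (simp add: sw_def)
lemma sw_inj: "inj_on (sw a b) X" by (auto simp: inj_on_def sw_def split: if_splits)
lemma sw_sw[simp]: "sw a b (sw a b x) = x" by (simp add: sw_def)
lemma sw_eq_iff[simp]: "sw a b x = sw a b y \<longleftrightarrow> x = y" by (auto simp: sw_def)

lemma ok_idt: "\<forall>t\<in>set idt. okt d t" by (simp add: idt_def okt_def)
lemma ok_sgn: "\<forall>t\<in>set (sgnt a). okt d t" by (simp add: sgnt_def okt_def)
lemma ok_swp: "a < d \<Longrightarrow> b < d \<Longrightarrow> \<forall>t\<in>set (swp a b). okt d t"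
  by (simp add: swp_def okt_def sw_lt sw_inj)
lemma ok_KK: "\<forall>t\<in>set (KK a). okt d t"
  unfolding KK_def by (rule ok_scl) (use ok_idt ok_sgn in auto)
lemma ok_Kl: "\<forall>t\<in>set (Kl as). okt d t"
proof (induction as)
  case Nil show ?case by (simp add: ok_idt)
next
  case (Cons a as) show ?case using ok_cmp[OF ok_KK Cons.IH] by simp
qed

lemma fst_idt[simp]: "sum_list (map fst idt) = 1" by (simp add: idt_def)
lemma fst_swp[simp]: "sum_list (map fst (swp a b)) = 1" by (simp add: swp_def)
lemma fst_KK[simp]: "sum_list (map fst (KK a)) = 1" by (simp add: KK_def fst_scl sgnt_def idt_def)
lemma fst_Kl[simp]: "sum_list (map fst (Kl as)) = 1" by (induction as) (auto simp: fst_cmp)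

lemma ev_idt[simp]: "ev idt A p q = A $$ (p,q)" by (simp add: idt_def ev_def)
lemma ev_swp[simp]: "ev (swp a b) A p q = A $$ (sw a b p, sw a b q)" by (simp add: swp_def ev_def)
lemma ev_KK: "ev (KK a) A p q = (if (p = a \<longleftrightarrow> q = a) then A $$ (p,q) else 0)"
  unfolding KK_def ev_scl ev_append idt_def sgnt_def ev_Cons ev_Nil by auto
lemma ev_Kl: "p < d \<Longrightarrow> q < d \<Longrightarrow> ev (Kl as) A p q = (if (\<forall>a\<in>set as. (p = a \<longleftrightarrow> q = a)) then A $$ (p,q) else 0)"
proof (induction as arbitrary: p q)
  case Nil thus ?case by simp
next
  case (Cons a as)
  have "ev (Kl (a#as)) A p q = ev (KK a) (mat d d (\<lambda>(p,q). ev (Kl as) A p q)) p q"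
    using Cons.prems by (simp add: ev_cmp[OF ok_KK])
  thus ?case using Cons by (simp add: ev_KK)
qed

definition DD :: "nat \<Rightarrow> trm list" where "DD d = Kl [0..<d]"
definition EE :: "nat \<Rightarrow> nat \<Rightarrow> nat \<Rightarrow> trm list" where
  "EE d j k = Kl (filter (\<lambda>a. a \<noteq> j \<and> a \<noteq> k) [0..<d]) @ scl (-1) (DD d)"
definition Tx :: "nat \<Rightarrow> nat \<Rightarrow> nat \<Rightarrow> trm list" where
  "Tx d j k = scl (1/2) (EE d j k @ cmp (swp j k) (EE d j k))"
definition Ty :: "nat \<Rightarrow> nat \<Rightarrow> nat \<Rightarrow> trm list" where
  "Ty d j k = scl (1/2) (EE d j k @ scl (-1) (cmp (swp j k) (EE d j k)))"

lemma ok_DD: "\<forall>t\<in>set (DD d). okt d t" by (simp add: DD_def ok_Kl)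
lemma ok_EE: "\<forall>t\<in>set (EE d j k). okt d t" using ok_Kl ok_scl[OF ok_DD] by (auto simp: EE_def)
lemma ok_Tx: "j < d \<Longrightarrow> k < d \<Longrightarrow> \<forall>t\<in>set (Tx d j k). okt d t"
  unfolding Tx_def by (rule ok_scl) (use ok_EE ok_cmp[OF ok_swp ok_EE] in auto)
lemma ok_Ty: "j < d \<Longrightarrow> k < d \<Longrightarrow> \<forall>t\<in>set (Ty d j k). okt d t"
  unfolding Ty_def by (rule ok_scl) (use ok_EE ok_scl[OF ok_cmp[OF ok_swp ok_EE]] in auto)
lemma fst_DD[simp]: "sum_list (map fst (DD d)) = 1" by (simp add: DD_def)
lemma fst_EE[simp]: "sum_list (map fst (EE d j k)) = 0" by (simp add: EE_def fst_scl)
lemma fst_Tx: "sum_list (map fst (Tx d j k)) = 0" by (simp add: Tx_def fst_scl fst_cmp)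
lemma fst_Ty: "sum_list (map fst (Ty d j k)) = 0" by (simp add: Ty_def fst_scl fst_cmp)

lemma ev_DD: "p < d \<Longrightarrow> q < d \<Longrightarrow> ev (DD d) A p q = (if p = q then A $$ (p,q) else 0)"
  unfolding DD_def by (subst ev_Kl[of p d q]) auto

lemma ev_EE: assumes "p < d" "q < d"
  shows "ev (EE d j k) A p q = (if p \<noteq> q \<and> (p = j \<or> p = k) \<and> (q = j \<or> q = k) then A $$ (p,q) else 0)"
  unfolding EE_def ev_append ev_scl ev_DD[OF assms] ev_Kl[OF assms] using assms by auto

lemma ev_Tx: assumes "j < d" "k < d" "p < d" "q < d"
  shows "ev (Tx d j k) A p q = (if p \<noteq> q \<and> (p = j \<or> p = k) \<and> (q = j \<or> q = k)
        then complex_of_real (1/2) * (A $$ (p,q) + A $$ (q,p)) else 0)"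
proof -
  have "ev (Tx d j k) A p q = complex_of_real (1/2) * (ev (EE d j k) A p q + ev (EE d j k) A (sw j k p) (sw j k q))"
    unfolding Tx_def ev_scl ev_append ev_cmp[OF ok_swp[OF assms(1,2)] assms(3,4)] using assms by (simp add: sw_lt)
  thus ?thesis using assms by (simp add: ev_EE sw_lt) (auto simp: sw_def)
qed

lemma ev_Ty: assumes "j < d" "k < d" "p < d" "q < d"
  shows "ev (Ty d j k) A p q = (if p \<noteq> q \<and> (p = j \<or> p = k) \<and> (q = j \<or> q = k)
        then complex_of_real (1/2) * (A $$ (p,q) - A $$ (q,p)) else 0)"
proof -
  have "ev (Ty d j k) A p q = complex_of_real (1/2) * (ev (EE d j k) A p q - ev (EE d j k) A (sw j k p) (sw j k q))"
    unfolding Ty_def ev_scl ev_append ev_cmp[OF ok_swp[OF assms(1,2)] assms(3,4)] using assms by (simp add: sw_lt)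
  thus ?thesis using assms by (simp add: ev_EE sw_lt) (auto simp: sw_def)
qed

definition Yl :: "nat \<Rightarrow> nat \<Rightarrow> trm list" where
  "Yl d j = scl (real (d-j-1)) (concat (map (\<lambda>a. cmp (swp j a) (DD d)) [0..<j+1]))
          @ scl (real (j+1)) (concat (map (\<lambda>b. cmp (swp (j+1) b) (DD d)) [j+1..<d]))
          @ scl (-(real (j+1) * real (d-j-1))) (DD d)"
definition Tz :: "nat \<Rightarrow> nat \<Rightarrow> trm list" where
  "Tz d j = scl (1 / real d) (cmp (idt @ scl (-1) (swp j (j+1))) (Yl d j))"

definition YdF :: "nat \<Rightarrow> nat \<Rightarrow> complex mat \<Rightarrow> nat \<Rightarrow> complex" where
  "YdF d j A x = complex_of_real (real (d-j-1)) * (\<Sum>a\<leftarrow>[0..<j+1]. A $$ (sw j a x, sw j a x))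
     + complex_of_real (real (j+1)) * (\<Sum>b\<leftarrow>[j+1..<d]. A $$ (sw (j+1) b x, sw (j+1) b x))
     + complex_of_real (-(real (j+1) * real (d-j-1))) * A $$ (x,x)"

lemma ok_concat: "(\<And>x. x \<in> set L \<Longrightarrow> \<forall>t\<in>set (f x). okt d t) \<Longrightarrow> \<forall>t\<in>set (concat (map f L)). okt d t"
  by auto

lemma ok_Yl: assumes "j+1 < d" shows "\<forall>t\<in>set (Yl d j). okt d t"
proof -
  have 1: "\<forall>t\<in>set (concat (map (\<lambda>a. cmp (swp j a) (DD d)) [0..<j+1])). okt d t"
    by (rule ok_concat, rule ok_cmp[OF ok_swp ok_DD]) (use assms in auto)
  have 2: "\<forall>t\<in>set (concat (map (\<lambda>b. cmp (swp (j+1) b) (DD d)) [j+1..<d])). okt d t"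
    by (rule ok_concat, rule ok_cmp[OF ok_swp ok_DD]) (use assms in auto)
  show ?thesis unfolding Yl_def using ok_scl[OF 1] ok_scl[OF 2] ok_scl[OF ok_DD] by auto
qed

lemma ok_Tz: assumes "j+1 < d" shows "\<forall>t\<in>set (Tz d j). okt d t"
proof -
  have "\<forall>t\<in>set (idt @ scl (-1) (swp j (j+1))). okt d t"
    using ok_idt ok_scl[OF ok_swp[of j d "j+1"]] assms by auto
  thus ?thesis unfolding Tz_def by (intro ok_scl ok_cmp ok_Yl assms)
qed

lemma fst_Tz: "sum_list (map fst (Tz d j)) = 0"
  by (simp add: Tz_def fst_scl fst_cmp)

lemma ev_Yl: assumes "j+1 < d" "p < d" "q < d"
  shows "ev (Yl d j) A p q = (if p = q then YdF d j A p else 0)"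
proof -
  have e1: "ev (cmp (swp j a) (DD d)) A p q = (if p = q then A $$ (sw j a p, sw j a p) else 0)" if "a < d" for a
    using that assms by (simp add: ev_cmp[OF ok_swp[of j d a] assms(2,3)] ev_DD sw_lt)
  have e2: "ev (cmp (swp (j+1) b) (DD d)) A p q = (if p = q then A $$ (sw (j+1) b p, sw (j+1) b p) else 0)" if "b < d" for b
    using that assms by (simp add: ev_cmp[OF ok_swp[of "Suc j" d b] assms(2,3)] ev_DD sw_lt)
  have s1: "ev (concat (map (\<lambda>a. cmp (swp j a) (DD d)) [0..<j+1])) A p q
      = (if p = q then (\<Sum>a\<leftarrow>[0..<j+1]. A $$ (sw j a p, sw j a p)) else 0)"
  proof -
    have "(\<Sum>a\<leftarrow>[0..<j+1]. ev (cmp (swp j a) (DD d)) A p q) = (\<Sum>a\<leftarrow>[0..<j+1]. if p = q then A $$ (sw j a p, sw j a p) else 0)"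
      apply (rule arg_cong[where f=sum_list], rule map_cong, simp)
      apply (rule e1) using assms by auto
    thus ?thesis unfolding ev_concat by (cases "p = q") simp_all
  qed
  have s2: "ev (concat (map (\<lambda>b. cmp (swp (j+1) b) (DD d)) [j+1..<d])) A p q
      = (if p = q then (\<Sum>b\<leftarrow>[j+1..<d]. A $$ (sw (j+1) b p, sw (j+1) b p)) else 0)"
  proof -
    have "(\<Sum>b\<leftarrow>[j+1..<d]. ev (cmp (swp (j+1) b) (DD d)) A p q) = (\<Sum>b\<leftarrow>[j+1..<d]. if p = q then A $$ (sw (j+1) b p, sw (j+1) b p) else 0)"
      apply (rule arg_cong[where f=sum_list], rule map_cong, simp)
      apply (rule e2) using assms by auto
    thus ?thesis unfolding ev_concat by (cases "p = q") simp_all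
  qed
  show ?thesis unfolding Yl_def ev_append ev_scl s1 s2 ev_DD[OF assms(2,3)] YdF_def by simp
qed

lemma ev_Tz: assumes "j+1 < d" "p < d" "q < d"
  shows "ev (Tz d j) A p q = (if p = q \<and> p = j then complex_of_real (1 / real d) * (YdF d j A j - YdF d j A (j+1))
     else if p = q \<and> p = j+1 then complex_of_real (1 / real d) * (YdF d j A (j+1) - YdF d j A j) else 0)"
proof -
  have ok1: "\<forall>t\<in>set (idt @ scl (-1) (swp j (j+1))). okt d t"
    using ok_idt ok_scl[OF ok_swp[of j d "j+1"]] assms by auto
  have "ev (Tz d j) A p q = complex_of_real (1 / real d) * (ev (Yl d j) A p q - ev (Yl d j) A (sw j (j+1) p) (sw j (j+1) q))"
    unfolding Tz_def ev_scl ev_cmp[OF ok1 assms(2,3)] using assms by (simp add: sw_lt)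
  also have "\<dots> = complex_of_real (1 / real d) * ((if p = q then YdF d j A p else 0) - (if p = q then YdF d j A (sw j (j+1) p) else 0))"
    using assms by (simp add: ev_Yl sw_lt)
  finally show ?thesis by (auto simp: sw_def)
qed

lemma sum_list_cong_lt: "(\<And>x. x \<in> set L \<Longrightarrow> f x = g x) \<Longrightarrow> sum_list (map f L) = sum_list (map g L)"
  by (rule arg_cong[where f=sum_list], rule map_cong) auto

lemma YdF_zero: assumes "\<forall>x<d. A $$ (x,x) = 0" "j+1 < d" "x < d" shows "YdF d j A x = 0"
proof -
  have 1: "(\<Sum>a\<leftarrow>[0..<j+1]. A $$ (sw j a x, sw j a x)) = (\<Sum>a\<leftarrow>[0..<j+1]. 0)"
    by (rule sum_list_cong_lt) (use assms in \<open>auto simp: sw_lt\<close>)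
  have 2: "(\<Sum>b\<leftarrow>[j+1..<d]. A $$ (sw (j+1) b x, sw (j+1) b x)) = (\<Sum>b\<leftarrow>[j+1..<d]. 0)"
    by (rule sum_list_cong_lt) (use assms in \<open>auto simp: sw_lt\<close>)
  show ?thesis unfolding YdF_def 1 2 using assms by simp
qed

lemma YdF_z: assumes jd: "j+1 < d" and id: "i+1 < d"
  and A: "\<forall>x<d. A $$ (x,x) = (if x = i then 1 else 0) - (if x = i+1 then 1 else 0)"
  shows "YdF d j A j - YdF d j A (j+1) = of_nat d * (if i = j then 1 else 0)"
proof -
  have S1: "(\<Sum>a\<leftarrow>[0..<j+1]. A $$ (sw j a j, sw j a j)) = (if i = j then 1 else 0)"
  proof -
    have "(\<Sum>a\<leftarrow>[0..<j+1]. A $$ (sw j a j, sw j a j)) = (\<Sum>a\<leftarrow>[0..<j+1]. (if a = i then 1 else 0) - (if a = i+1 then 1 else 0))"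
      by (rule sum_list_cong_lt) (use A jd in \<open>auto simp: sw_def\<close>)
    also have "\<dots> = (\<Sum>a\<in>{0..<j+1}. (if a = i then 1 else 0) - (if a = i+1 then 1 else 0))"
      by (simp add: interv_sum_list_conv_sum_set_nat)
    also have "\<dots> = (if i = j then 1 else 0)"
      by (simp add: sum_subtractf)
    finally show ?thesis .
  qed
  have S4: "(\<Sum>b\<leftarrow>[j+1..<d]. A $$ (sw (j+1) b (j+1), sw (j+1) b (j+1))) = - (if i = j then 1 else 0)"
  proof -
    have "(\<Sum>b\<leftarrow>[j+1..<d]. A $$ (sw (j+1) b (j+1), sw (j+1) b (j+1))) = (\<Sum>b\<leftarrow>[j+1..<d]. (if b = i then 1 else 0) - (if b = i+1 then 1 else 0))"
      by (rule sum_list_cong_lt) (use A jd in \<open>auto simp: sw_def\<close>)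
    also have "\<dots> = (\<Sum>b\<in>{j+1..<d}. (if b = i then 1 else 0) - (if b = i+1 then 1 else 0))"
      by (simp add: interv_sum_list_conv_sum_set_nat)
    also have "\<dots> = - (if i = j then 1 else 0)"
      using id by (simp add: sum_subtractf)
    finally show ?thesis .
  qed
  have S2: "(\<Sum>b\<leftarrow>[j+1..<d]. A $$ (sw (j+1) b j, sw (j+1) b j)) = of_nat (d - (j+1)) * A $$ (j,j)"
  proof -
    have "(\<Sum>b\<leftarrow>[j+1..<d]. A $$ (sw (j+1) b j, sw (j+1) b j)) = (\<Sum>b\<leftarrow>[j+1..<d]. A $$ (j,j))"
      by (rule sum_list_cong_lt) (auto simp: sw_def)
    thus ?thesis by (simp add: sum_list_triv)
  qed
  have S3: "(\<Sum>a\<leftarrow>[0..<j+1]. A $$ (sw j a (j+1), sw j a (j+1))) = of_nat (j+1) * A $$ (j+1,j+1)"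
  proof -
    have "(\<Sum>a\<leftarrow>[0..<j+1]. A $$ (sw j a (j+1), sw j a (j+1))) = (\<Sum>a\<leftarrow>[0..<j+1]. A $$ (j+1,j+1))"
      by (rule sum_list_cong_lt) (auto simp: sw_def)
    thus ?thesis by (simp only: sum_list_triv length_upt) simp
  qed
  have dd: "(of_nat (d - j - 1) :: complex) = of_nat d - of_nat j - 1" using jd by (simp add: of_nat_diff)
  have dd2: "(of_nat (d - (j + 1)) :: complex) = of_nat d - of_nat j - 1" using jd by (simp add: of_nat_diff)
  show ?thesis
    unfolding YdF_def S1 S2 S3 S4 using dd dd2
    by (simp add: algebra_simps)
qed

lemma ketbra_idx[simp]: "p < d \<Longrightarrow> q < d \<Longrightarrow> ketbra d j k $$ (p,q) = (if p = j \<and> q = k then 1 else 0)"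
  by (simp add: ketbra_def)
lemma ketbra_carrier[simp]: "ketbra d j k \<in> carrier_mat d d" by (simp add: ketbra_def)
lemma sx_idx: "p < d \<Longrightarrow> q < d \<Longrightarrow> sigma_x d j k $$ (p,q) = (if p = j \<and> q = k then 1 else 0) + (if p = k \<and> q = j then 1 else 0)"
  by (simp add: sigma_x_def ketbra_def)
lemma sy_idx: "p < d \<Longrightarrow> q < d \<Longrightarrow> sigma_y d j k $$ (p,q) = - \<i> * ((if p = j \<and> q = k then 1 else 0) - (if p = k \<and> q = j then 1 else 0))"
  by (simp add: sigma_y_def ketbra_def)
lemma sz_idx: "p < d \<Longrightarrow> q < d \<Longrightarrow> sigma_z d j $$ (p,q) = (if p = j \<and> q = j then 1 else 0) - (if p = j+1 \<and> q = j+1 then 1 else 0)"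
  by (simp add: sigma_z_def ketbra_def)
lemma sx_c: "sigma_x d j k \<in> carrier_mat d d" unfolding sigma_x_def
  by (rule add_carrier_mat) (rule ketbra_carrier)+
lemma sy_c: "sigma_y d j k \<in> carrier_mat d d" unfolding sigma_y_def
  by (rule smult_carrier_mat, rule minus_carrier_mat) (rule ketbra_carrier)+
lemma sz_c: "sigma_z d j \<in> carrier_mat d d" unfolding sigma_z_def
  by (rule minus_carrier_mat) (rule ketbra_carrier)+
lemma s_dims[simp]: "dim_row (sigma_x d j k) = d" "dim_col (sigma_x d j k) = d"
  "dim_row (sigma_y d j k) = d" "dim_col (sigma_y d j k) = d"
  "dim_row (sigma_z d i) = d" "dim_col (sigma_z d i) = d"
  using carrier_matD[OF sx_c[of d j k]] carrier_matD[OF sy_c[of d j k]] carrier_matD[OF sz_c[of d i]] by simp_all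
lemma hb_c: "B \<in> herm_basis d \<Longrightarrow> B \<in> carrier_mat d d"
  unfolding herm_basis_def using sx_c sy_c sz_c by auto



lemma Tx_sym: assumes "j < k" "k < d" "p < d" "q < d"
  shows "ev (Tx d j k) A p q = (if p \<noteq> q \<and> (p = j \<or> p = k) \<and> (q = j \<or> q = k)
        then complex_of_real (1/2) * (A $$ (j,k) + A $$ (k,j)) else 0)"
proof -
  have "p \<noteq> q \<and> (p = j \<or> p = k) \<and> (q = j \<or> q = k) \<Longrightarrow> A $$ (p,q) + A $$ (q,p) = A $$ (j,k) + A $$ (k,j)"
    by (auto simp: add.commute)
  thus ?thesis using assms by (simp add: ev_Tx)
qed

lemma Ty_sym: assumes "j < k" "k < d" "p < d" "q < d"
  shows "ev (Ty d j k) A p q = (if p = j \<and> q = k then complex_of_real (1/2) * (A $$ (j,k) - A $$ (k,j))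
      else if p = k \<and> q = j then - complex_of_real (1/2) * (A $$ (j,k) - A $$ (k,j)) else 0)"
  using assms by (auto simp: ev_Ty algebra_simps)

lemma case_x: assumes jk: "j < k" "k < d"
  shows "\<exists>T\<in>zerospan_conj d. T (sigma_x d j k) = sigma_x d j k \<and>
           (\<forall>B' \<in> herm_basis d. B' \<noteq> sigma_x d j k \<longrightarrow> T B' = 0\<^sub>m d d)"
proof -
  have jd: "j < d" using jk by simp
  obtain T where T: "T \<in> zerospan_conj d" "\<forall>A\<in>carrier_mat d d. T A = mat d d (\<lambda>(p,q). ev (Tx d j k) A p q)"
    using realize[OF ok_Tx[OF jd jk(2)] fst_Tx] by blast
  have 1: "T (sigma_x d j k) = sigma_x d j k"
  proof -
    have "mat d d (\<lambda>(p,q). ev (Tx d j k) (sigma_x d j k) p q) = sigma_x d j k"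
    proof (rule eq_matI)
      fix p q assume "p < dim_row (sigma_x d j k)" "q < dim_col (sigma_x d j k)"
      hence pq: "p < d" "q < d" by auto
      have v: "sigma_x d j k $$ (j,k) + sigma_x d j k $$ (k,j) = 2" using jk by (simp add: sx_idx)
      have e: "mat d d (\<lambda>(p,q). ev (Tx d j k) (sigma_x d j k) p q) $$ (p,q) = ev (Tx d j k) (sigma_x d j k) p q"
        using pq by simp
      show "mat d d (\<lambda>(p,q). ev (Tx d j k) (sigma_x d j k) p q) $$ (p,q) = sigma_x d j k $$ (p,q)"
      proof -
        have jk': "j \<noteq> k" using jk by simp
        consider "p = j" "q = k" | "p = k" "q = j" | "\<not> (p = j \<and> q = k)" "\<not> (p = k \<and> q = j)" by blast
        thus ?thesis
        proof cases
          case 1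
          have "ev (Tx d j k) (sigma_x d j k) j k = sigma_x d j k $$ (j,k)"
            using Tx_sym[OF jk jd jk(2), of "sigma_x d j k"] sx_idx[OF jd jk(2)] sx_idx[OF jk(2) jd] jk' by simp
          thus ?thesis using 1 e by simp
        next
          case 2
          have "ev (Tx d j k) (sigma_x d j k) k j = sigma_x d j k $$ (k,j)"
            using Tx_sym[OF jk jk(2) jd, of "sigma_x d j k"] sx_idx[OF jd jk(2)] sx_idx[OF jk(2) jd] jk' by simp
          thus ?thesis using 2 e by simp
        next
          case 3
          hence c: "(p \<noteq> q \<and> (p = j \<or> p = k) \<and> (q = j \<or> q = k)) = False" by blast
          have "ev (Tx d j k) (sigma_x d j k) p q = 0" unfolding Tx_sym[OF jk pq] c if_False by simp
          moreover have "sigma_x d j k $$ (p,q) = 0" unfolding sx_idx[OF pq] if_not_P[OF 3(1)] if_not_P[OF 3(2)] by simp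
          ultimately show ?thesis using e by simp
        qed
      qed
    qed auto
    thus ?thesis using T sx_c by auto
  qed
  have 2: "T B' = 0\<^sub>m d d" if B': "B' \<in> herm_basis d" "B' \<noteq> sigma_x d j k" for B'
  proof -
    have z: "B' $$ (j,k) + B' $$ (k,j) = 0"
    proof -
      have "(\<exists>j' k'. B' = sigma_x d j' k' \<and> j' < k' \<and> k' < d) \<or> (\<exists>j' k'. B' = sigma_y d j' k' \<and> j' < k' \<and> k' < d)
          \<or> (\<exists>i. B' = sigma_z d i \<and> i + 1 < d)" using B'(1) unfolding herm_basis_def by simp
      then consider (x) j' k' where "B' = sigma_x d j' k'" "j' < k'" "k' < d"
        | (y) j' k' where "B' = sigma_y d j' k'" "j' < k'" "k' < d"
        | (z) i where "B' = sigma_z d i" "i + 1 < d"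
        by blast
      thus ?thesis
      proof cases
        case x
        hence "(j',k') \<noteq> (j,k)" using B'(2) by auto
        thus ?thesis using x jk by (auto simp: sx_idx[of j d k] sx_idx[of k d j])
      next
        case y
        thus ?thesis using jk by (simp add: sy_idx[of j d k] sy_idx[of k d j])
      next
        case z
        thus ?thesis using jk by (simp add: sz_idx[of j d k] sz_idx[of k d j])
      qed
    qed
    have "mat d d (\<lambda>(p,q). ev (Tx d j k) B' p q) = 0\<^sub>m d d"
    proof (rule eq_matI)
      fix p q assume "p < dim_row (0\<^sub>m d d :: complex mat)" "q < dim_col (0\<^sub>m d d :: complex mat)"
      hence pq: "p < d" "q < d" by auto
      show "mat d d (\<lambda>(p,q). ev (Tx d j k) B' p q) $$ (p,q) = 0\<^sub>m d d $$ (p,q)"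
        using z pq by (simp add: Tx_sym[OF jk pq])
    qed auto
    thus ?thesis using T hb_c[OF B'(1)] by auto
  qed
  show ?thesis using T(1) 1 2 by blast
qed

lemma case_y: assumes jk: "j < k" "k < d"
  shows "\<exists>T\<in>zerospan_conj d. T (sigma_y d j k) = sigma_y d j k \<and>
           (\<forall>B' \<in> herm_basis d. B' \<noteq> sigma_y d j k \<longrightarrow> T B' = 0\<^sub>m d d)"
proof -
  have jd: "j < d" using jk by simp
  obtain T where T: "T \<in> zerospan_conj d" "\<forall>A\<in>carrier_mat d d. T A = mat d d (\<lambda>(p,q). ev (Ty d j k) A p q)"
    using realize[OF ok_Ty[OF jd jk(2)] fst_Ty] by blast
  have 1: "T (sigma_y d j k) = sigma_y d j k"
  proof -
    have "mat d d (\<lambda>(p,q). ev (Ty d j k) (sigma_y d j k) p q) = sigma_y d j k"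
    proof (rule eq_matI)
      fix p q assume "p < dim_row (sigma_y d j k)" "q < dim_col (sigma_y d j k)"
      hence pq: "p < d" "q < d" by auto
      have v: "sigma_y d j k $$ (j,k) - sigma_y d j k $$ (k,j) = - 2 * \<i>" using jk by (simp add: sy_idx)
      have e: "mat d d (\<lambda>(p,q). ev (Ty d j k) (sigma_y d j k) p q) $$ (p,q) = ev (Ty d j k) (sigma_y d j k) p q"
        using pq by simp
      show "mat d d (\<lambda>(p,q). ev (Ty d j k) (sigma_y d j k) p q) $$ (p,q) = sigma_y d j k $$ (p,q)"
      proof -
        have jk': "j \<noteq> k" using jk by simp
        consider "p = j" "q = k" | "p = k" "q = j" | "\<not> (p = j \<and> q = k)" "\<not> (p = k \<and> q = j)" by blast
        thus ?thesis
        proof cases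
          case 1
          have "ev (Ty d j k) (sigma_y d j k) j k = sigma_y d j k $$ (j,k)"
            using Ty_sym[OF jk jd jk(2), of "sigma_y d j k"] sy_idx[OF jd jk(2)] sy_idx[OF jk(2) jd] jk' by simp
          thus ?thesis using 1 e by simp
        next
          case 2
          have "ev (Ty d j k) (sigma_y d j k) k j = sigma_y d j k $$ (k,j)"
            using Ty_sym[OF jk jk(2) jd, of "sigma_y d j k"] sy_idx[OF jd jk(2)] sy_idx[OF jk(2) jd] jk' by simp
          thus ?thesis using 2 e by simp
        next
          case 3
          have "ev (Ty d j k) (sigma_y d j k) p q = 0" unfolding Ty_sym[OF jk pq] if_not_P[OF 3(1)] if_not_P[OF 3(2)] by simp
          moreover have "sigma_y d j k $$ (p,q) = 0" unfolding sy_idx[OF pq] if_not_P[OF 3(1)] if_not_P[OF 3(2)] by simp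
          ultimately show ?thesis using e by simp
        qed
      qed
    qed auto
    thus ?thesis using T sy_c by auto
  qed
  have 2: "T B' = 0\<^sub>m d d" if B': "B' \<in> herm_basis d" "B' \<noteq> sigma_y d j k" for B'
  proof -
    have z: "B' $$ (j,k) - B' $$ (k,j) = 0"
    proof -
      have "(\<exists>j' k'. B' = sigma_x d j' k' \<and> j' < k' \<and> k' < d) \<or> (\<exists>j' k'. B' = sigma_y d j' k' \<and> j' < k' \<and> k' < d)
          \<or> (\<exists>i. B' = sigma_z d i \<and> i + 1 < d)" using B'(1) unfolding herm_basis_def by simp
      then consider (x) j' k' where "B' = sigma_x d j' k'" "j' < k'" "k' < d"
        | (y) j' k' where "B' = sigma_y d j' k'" "j' < k'" "k' < d"
        | (z) i where "B' = sigma_z d i" "i + 1 < d"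
        by blast
      thus ?thesis
      proof cases
        case x
        have kd: "k < d" using jk by simp
        have "sigma_x d j' k' $$ (j,k) = sigma_x d j' k' $$ (k,j)"
        proof -
          have e1: "(k = j' \<and> j = k') = (j = k' \<and> k = j')" "(k = k' \<and> j = j') = (j = j' \<and> k = k')" by auto
          show ?thesis unfolding sx_idx[OF jd kd] sx_idx[OF kd jd] e1 by (rule add.commute)
        qed
        thus ?thesis using x(1) by simp
      next
        case y
        hence ne: "(j',k') \<noteq> (j,k)" using B'(2) by auto
        have kd: "k < d" using jk by simp
        have n1: "\<not> (j = j' \<and> k = k')" using ne by auto
        have n2: "\<not> (j = k' \<and> k = j')" using jk y(2) by auto
        have n3: "\<not> (k = j' \<and> j = k')" using jk y(2) by auto
        have n4: "\<not> (k = k' \<and> j = j')" using ne by auto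
        show ?thesis unfolding y(1) sy_idx[OF jd kd] sy_idx[OF kd jd] if_not_P[OF n1] if_not_P[OF n2]
          if_not_P[OF n3] if_not_P[OF n4] by simp
      next
        case z
        thus ?thesis using jk by (simp add: sz_idx[of j d k] sz_idx[of k d j])
      qed
    qed
    have "mat d d (\<lambda>(p,q). ev (Ty d j k) B' p q) = 0\<^sub>m d d"
    proof (rule eq_matI)
      fix p q assume "p < dim_row (0\<^sub>m d d :: complex mat)" "q < dim_col (0\<^sub>m d d :: complex mat)"
      hence pq: "p < d" "q < d" by auto
      show "mat d d (\<lambda>(p,q). ev (Ty d j k) B' p q) $$ (p,q) = 0\<^sub>m d d $$ (p,q)"
        using z pq by (simp add: Ty_sym[OF jk pq])
    qed auto
    thus ?thesis using T hb_c[OF B'(1)] by auto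
  qed
  show ?thesis using T(1) 1 2 by blast
qed

lemma case_z: assumes jd: "j + 1 < d"
  shows "\<exists>T\<in>zerospan_conj d. T (sigma_z d j) = sigma_z d j \<and>
           (\<forall>B' \<in> herm_basis d. B' \<noteq> sigma_z d j \<longrightarrow> T B' = 0\<^sub>m d d)"
proof -
  obtain T where T: "T \<in> zerospan_conj d" "\<forall>A\<in>carrier_mat d d. T A = mat d d (\<lambda>(p,q). ev (Tz d j) A p q)"
    using realize[OF ok_Tz[OF jd] fst_Tz] by blast
  have diag: "\<forall>x<d. sigma_z d i $$ (x,x) = (if x = i then 1 else 0) - (if x = i+1 then 1 else 0)" for i
    by (simp add: sz_idx)
  have 1: "T (sigma_z d j) = sigma_z d j"
  proof -
    have v: "complex_of_real (1 / real d) * (YdF d j (sigma_z d j) j - YdF d j (sigma_z d j) (j+1)) = 1"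
      using YdF_z[OF jd jd diag[of j]] jd by simp
    have "mat d d (\<lambda>(p,q). ev (Tz d j) (sigma_z d j) p q) = sigma_z d j"
    proof (rule eq_matI)
      fix p q assume "p < dim_row (sigma_z d j)" "q < dim_col (sigma_z d j)"
      hence pq: "p < d" "q < d" by auto
      have e: "mat d d (\<lambda>(p,q). ev (Tz d j) (sigma_z d j) p q) $$ (p,q) = ev (Tz d j) (sigma_z d j) p q"
        using pq by simp
      show "mat d d (\<lambda>(p,q). ev (Tz d j) (sigma_z d j) p q) $$ (p,q) = sigma_z d j $$ (p,q)"
      proof -
        have v2: "complex_of_real (1 / real d) * (YdF d j (sigma_z d j) (j+1) - YdF d j (sigma_z d j) j) = -1"
          using v by (simp add: right_diff_distrib algebra_simps)
        consider "p = q" "p = j" | "p = q" "p = j+1" | "p \<noteq> q" | "p = q" "p \<noteq> j" "p \<noteq> j+1" by blast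
        thus ?thesis
        proof cases
          case 1 thus ?thesis using 1 e ev_Tz[OF jd pq] sz_idx[OF pq] v by simp
        next
          case 2 thus ?thesis using 2 e ev_Tz[OF jd pq] sz_idx[OF pq] v2 by simp
        next
          case 3 thus ?thesis using 3 e ev_Tz[OF jd pq] sz_idx[OF pq] by simp
        next
          case 4 thus ?thesis using 4 e ev_Tz[OF jd pq] sz_idx[OF pq] by simp
        qed
      qed
    qed auto
    thus ?thesis using T sz_c by auto
  qed
  have 2: "T B' = 0\<^sub>m d d" if B': "B' \<in> herm_basis d" "B' \<noteq> sigma_z d j" for B'
  proof -
    have z: "YdF d j B' j - YdF d j B' (j+1) = 0"
    proof -
      have "(\<exists>j' k'. B' = sigma_x d j' k' \<and> j' < k' \<and> k' < d) \<or> (\<exists>j' k'. B' = sigma_y d j' k' \<and> j' < k' \<and> k' < d)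
          \<or> (\<exists>i. B' = sigma_z d i \<and> i + 1 < d)" using B'(1) unfolding herm_basis_def by simp
      then consider (x) j' k' where "B' = sigma_x d j' k'" "j' < k'" "k' < d"
        | (y) j' k' where "B' = sigma_y d j' k'" "j' < k'" "k' < d"
        | (z) i where "B' = sigma_z d i" "i + 1 < d"
        by blast
      thus ?thesis
      proof cases
        case x
        hence "\<forall>x<d. B' $$ (x,x) = 0" by (simp add: sx_idx)
        thus ?thesis using YdF_zero[of d B' j] jd by simp
      next
        case y
        hence "\<forall>x<d. B' $$ (x,x) = 0" by (simp add: sy_idx)
        thus ?thesis using YdF_zero[of d B' j] jd by simp
      next
        case z
        hence "i \<noteq> j" using B'(2) by auto
        thus ?thesis using YdF_z[OF jd z(2) diag[of i]] z(1) by simp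
      qed
    qed
    have z2: "YdF d j B' (j+1) - YdF d j B' j = 0" using z by simp
    have "mat d d (\<lambda>(p,q). ev (Tz d j) B' p q) = 0\<^sub>m d d"
    proof (rule eq_matI)
      fix p q assume "p < dim_row (0\<^sub>m d d :: complex mat)" "q < dim_col (0\<^sub>m d d :: complex mat)"
      hence pq: "p < d" "q < d" by auto
      show "mat d d (\<lambda>(p,q). ev (Tz d j) B' p q) $$ (p,q) = 0\<^sub>m d d $$ (p,q)"
        using z z2 pq by (simp add: ev_Tz[OF jd pq])
    qed auto
    thus ?thesis using T hb_c[OF B'(1)] by auto
  qed
  show ?thesis using T(1) 1 2 by blast
qed

theorem lemma1:
  fixes d :: nat and B :: "complex mat"
  assumes "B \<in> herm_basis d"
  shows "\<exists>T \<in> zerospan_conj d. T B = B \<and>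
           (\<forall>B' \<in> herm_basis d. B' \<noteq> B \<longrightarrow> T B' = 0\<^sub>m d d)"
proof -
  have "(\<exists>j k. B = sigma_x d j k \<and> j < k \<and> k < d) \<or> (\<exists>j k. B = sigma_y d j k \<and> j < k \<and> k < d)
      \<or> (\<exists>i. B = sigma_z d i \<and> i + 1 < d)" using assms unfolding herm_basis_def by simp
  then consider (x) j k where "B = sigma_x d j k" "j < k" "k < d"
    | (y) j k where "B = sigma_y d j k" "j < k" "k < d"
    | (z) i where "B = sigma_z d i" "i + 1 < d"
    by blast
  thus ?thesis
  proof cases
    case x thus ?thesis using case_x[OF x(2,3)] by simp
  next
    case y thus ?thesis using case_y[OF y(2,3)] by simp
  next
    case z thus ?thesis using case_z[OF z(2)] by simp
  qed
qed


end
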